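(* Let $n>1$, $a\in\mathcal{T}_n$ with $\operatorname{ran}(a)=\{a_1,\dots,a_p\}$ ($p=\operatorname{rank}(a)$), and put $n(a_i)=|a^{-1}(a_i)|$ for $1\le i\le p$. In the semigroup $(\mathcal{T}_n,*_a)$: for each $1\le m\le p$ there are exactly $S(n,m)$ $\mathcal{R}$-classes with more than one element consisting of maps of rank $m$, each of cardinality $$m!\sum_{1\le i_1<i_2<\cdots<i_m\le p} n(a_{i_1})\cdots n(a_{i_m});$$ these are all the multi-element $\mathcal{R}$-classes, so their number is $\sum_{m=1}^{p}S(n,m)$, and the number of one-element $\mathcal{R}$-classes equals $$n^n-\sum_{m=1}^{p}S(n,m)\,m!\sum_{1\le i_1<\cdots<i_m\le p} n(a_{i_1})\cdots n(a_{i_m}).$$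
   Context: $\mathcal{T}_n$ is the set of all maps $N\to N$, $N=\{1,\dots,n\}$. Maps are composed from left to right: $(xy)(i)=y(x(i))$. For fixed $a\in\mathcal{T}_n$, $x*_a y:=xay$. $\operatorname{ran}(x)$ is the image of $x$, $\operatorname{rank}(x)=|\operatorname{ran}(x)|$, $a^{-1}(a_i)$ is the full preimage of $a_i$. Green's relation: $x\mathcal{R}y$ iff $xS^1=yS^1$, where $S^1$ is the semigroup with an identity adjoined. $S(r,k)$ is the Stirling number of the second kind. *)

theory Defs
  imports "HOL-Library.FuncSet" "HOL-Combinatorics.Stirling"
begin

definition Tn :: "nat \<Rightarrow> (nat \<Rightarrow> nat) set" where
  "Tn n = {1..n} \<rightarrow>\<^sub>E {1..n}"

text \<open>Sandwich product x *_a y = x a y, composing left to right: (x a y)(i) = y(a(x(i))).\<close>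
definition sand :: "nat \<Rightarrow> (nat \<Rightarrow> nat) \<Rightarrow> (nat \<Rightarrow> nat) \<Rightarrow> (nat \<Rightarrow> nat) \<Rightarrow> (nat \<Rightarrow> nat)" where
  "sand n a x y = restrict (\<lambda>i. y (a (x i))) {1..n}"

definition rideal :: "nat \<Rightarrow> (nat \<Rightarrow> nat) \<Rightarrow> (nat \<Rightarrow> nat) \<Rightarrow> (nat \<Rightarrow> nat) set" where
  "rideal n a x = insert x {sand n a x s | s. s \<in> Tn n}"

definition Rclass :: "nat \<Rightarrow> (nat \<Rightarrow> nat) \<Rightarrow> (nat \<Rightarrow> nat) \<Rightarrow> (nat \<Rightarrow> nat) set" where
  "Rclass n a x = {y \<in> Tn n. rideal n a y = rideal n a x}"

definition Rclasses :: "nat \<Rightarrow> (nat \<Rightarrow> nat) \<Rightarrow> (nat \<Rightarrow> nat) set set" where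
  "Rclasses n a = Rclass n a ` Tn n"

definition rank :: "nat \<Rightarrow> (nat \<Rightarrow> nat) \<Rightarrow> nat" where
  "rank n x = card (x ` {1..n})"

definition fibre_card :: "nat \<Rightarrow> (nat \<Rightarrow> nat) \<Rightarrow> nat \<Rightarrow> nat" where
  "fibre_card n a b = card {i \<in> {1..n}. a i = b}"

text \<open>sum over i_1 < ... < i_m of n(a_{i_1}) ... n(a_{i_m}), i.e. over m-subsets of ran(a).\<close>
definition esum :: "nat \<Rightarrow> (nat \<Rightarrow> nat) \<Rightarrow> nat \<Rightarrow> nat" where
  "esum n a m = (\<Sum>I \<in> {I. I \<subseteq> a ` {1..n} \<and> card I = m}. \<Prod>b\<in>I. fibre_card n a b)"

end

theory Submission
  imports Defs "HOL-Combinatorics.Permutations"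
begin


lemma onto_insert_bij:
  assumes "x \<notin> A"
  shows "bij_betw (\<lambda>f. (f x, restrict f A))
     {f \<in> insert x A \<rightarrow>\<^sub>E T. f ` insert x A = T}
     (SIGMA t:T. {g \<in> A \<rightarrow>\<^sub>E T. insert t (g ` A) = T})"
proof (rule bij_betwI')
  fix f1 f2 assume f1: "f1 \<in> {f \<in> insert x A \<rightarrow>\<^sub>E T. f ` insert x A = T}"
    and f2: "f2 \<in> {f \<in> insert x A \<rightarrow>\<^sub>E T. f ` insert x A = T}"
  show "((f1 x, restrict f1 A) = (f2 x, restrict f2 A)) = (f1 = f2)"
  proof
    assume h: "(f1 x, restrict f1 A) = (f2 x, restrict f2 A)"
    show "f1 = f2"
    proof (rule extensionalityI[of _ "insert x A"])
      show "f1 \<in> extensional (insert x A)" using f1 by (auto simp: PiE_def)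
      show "f2 \<in> extensional (insert x A)" using f2 by (auto simp: PiE_def)
      fix z assume "z \<in> insert x A"
      then show "f1 z = f2 z" using h by (auto dest: fun_cong[where x=z] simp: restrict_def split: if_splits)
    qed
  qed simp
next
  fix f assume f: "f \<in> {f \<in> insert x A \<rightarrow>\<^sub>E T. f ` insert x A = T}"
  then show "(f x, restrict f A) \<in> (SIGMA t:T. {g \<in> A \<rightarrow>\<^sub>E T. insert t (g ` A) = T})"
    by auto
next
  fix p assume p: "p \<in> (SIGMA t:T. {g \<in> A \<rightarrow>\<^sub>E T. insert t (g ` A) = T})"
  then obtain t g where pt: "p = (t, g)" and t: "t \<in> T" and g: "g \<in> A \<rightarrow>\<^sub>E T" and gi: "insert t (g ` A) = T"
    by auto
  have gx: "g x = undefined" using g assms by (auto simp: PiE_def extensional_def)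
  have e1: "restrict (g(x := t)) A = g" using g assms
    by (intro ext) (auto simp: restrict_def PiE_def extensional_def)
  have e2: "(g(x := t)) ` insert x A = T" using gi assms by auto
  have e3: "g(x := t) \<in> insert x A \<rightarrow>\<^sub>E T" using g t gx by (auto simp: PiE_def extensional_def)
  show "\<exists>f\<in>{f \<in> insert x A \<rightarrow>\<^sub>E T. f ` insert x A = T}. p = (f x, restrict f A)"
    by (rule bexI[of _ "g(x := t)"]) (use e1 e2 e3 pt in auto)
qed

lemma card_onto:
  assumes "finite A"
  shows "finite T \<Longrightarrow> card {f \<in> A \<rightarrow>\<^sub>E T. f ` A = T} = fact (card T) * Stirling (card A) (card T)"
  using assms
proof (induction A arbitrary: T rule: finite_induct)
  case empty
  then show ?case
  proof (cases "T = {}")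
    case True
    then show ?thesis by simp
  next
    case False
    then obtain k where "card T = Suc k" using empty.prems
      by (metis card_0_eq not0_implies_Suc)
    then show ?thesis using False by simp
  qed
next
  case (insert x A)
  show ?case
  proof (cases "T = {}")
    case True
    then show ?thesis using insert by simp
  next
    case False
    then obtain k where k: "card T = Suc k" using insert.prems
      by (metis card_0_eq not0_implies_Suc)
    have G: "{g \<in> A \<rightarrow>\<^sub>E T. insert t (g ` A) = T}
        = {g \<in> A \<rightarrow>\<^sub>E T. g ` A = T} \<union> {g \<in> A \<rightarrow>\<^sub>E (T - {t}). g ` A = T - {t}}"
      if t: "t \<in> T" for t
    proof (intro equalityI subsetI)
      fix g assume g: "g \<in> {g \<in> A \<rightarrow>\<^sub>E T. insert t (g ` A) = T}"
      show "g \<in> {g \<in> A \<rightarrow>\<^sub>E T. g ` A = T} \<union> {g \<in> A \<rightarrow>\<^sub>E (T - {t}). g ` A = T - {t}}"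
      proof (cases "t \<in> g ` A")
        case True
        then show ?thesis using g by (auto simp: insert_absorb)
      next
        case False
        then have "g ` A = T - {t}" using g by auto
        then show ?thesis using g by (auto simp: PiE_def Pi_def)
      qed
    next
      fix g assume "g \<in> {g \<in> A \<rightarrow>\<^sub>E T. g ` A = T} \<union> {g \<in> A \<rightarrow>\<^sub>E (T - {t}). g ` A = T - {t}}"
      then show "g \<in> {g \<in> A \<rightarrow>\<^sub>E T. insert t (g ` A) = T}" using t by (auto simp: PiE_def Pi_def)
    qed
    have cG: "card {g \<in> A \<rightarrow>\<^sub>E T. insert t (g ` A) = T}
        = fact (Suc k) * Stirling (card A) (Suc k) + fact k * Stirling (card A) k"
      if t: "t \<in> T" for t
    proof -
      have d: "{g \<in> A \<rightarrow>\<^sub>E T. g ` A = T} \<inter> {g \<in> A \<rightarrow>\<^sub>E (T - {t}). g ` A = T - {t}} = {}"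
        using t by auto
      have f1: "finite {g \<in> A \<rightarrow>\<^sub>E T. g ` A = T}" using insert by (intro finite_subset[OF _ finite_PiE[of A "\<lambda>_. T"]]) auto
      have f2: "finite {g \<in> A \<rightarrow>\<^sub>E (T - {t}). g ` A = T - {t}}" using insert by (intro finite_subset[OF _ finite_PiE[of A "\<lambda>_. T - {t}"]]) auto
      have "card (T - {t}) = k" using t k insert.prems by simp
      then show ?thesis
        unfolding G[OF t] card_Un_disjoint[OF f1 f2 d]
        using insert.IH[of T] insert.IH[of "T - {t}"] insert.prems k by simp
    qed
    have "card {f \<in> insert x A \<rightarrow>\<^sub>E T. f ` insert x A = T}
        = card (SIGMA t:T. {g \<in> A \<rightarrow>\<^sub>E T. insert t (g ` A) = T})"
      by (rule bij_betw_same_card[OF onto_insert_bij[OF insert.hyps(2)]])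
    also have "\<dots> = (\<Sum>t\<in>T. card {g \<in> A \<rightarrow>\<^sub>E T. insert t (g ` A) = T})"
      using insert by (intro card_SigmaI) (auto intro!: finite_subset[OF _ finite_PiE[of A "\<lambda>_. T"]])
    also have "\<dots> = Suc k * (fact (Suc k) * Stirling (card A) (Suc k) + fact k * Stirling (card A) k)"
      using cG k by simp
    also have "\<dots> = fact (card T) * Stirling (card (insert x A)) (card T)"
      using k insert.hyps by (simp add: algebra_simps)
    finally show ?thesis .
  qed
qed

lemma card_bijs:
  assumes fA: "finite A" and fB: "finite B" and c: "card A = card B"
  shows "card {g \<in> A \<rightarrow>\<^sub>E B. bij_betw g A B} = fact (card A)"
proof -
  obtain h where h: "bij_betw h B A" using finite_same_card_bij[OF fB fA] c by metis
  have "bij_betw (\<lambda>g z. if z \<in> A then h (g z) else z) {g \<in> A \<rightarrow>\<^sub>E B. bij_betw g A B} {p. p permutes A}"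
  proof (rule bij_betwI')
    fix g1 g2 assume g1: "g1 \<in> {g \<in> A \<rightarrow>\<^sub>E B. bij_betw g A B}" and g2: "g2 \<in> {g \<in> A \<rightarrow>\<^sub>E B. bij_betw g A B}"
    show "((\<lambda>z. if z \<in> A then h (g1 z) else z) = (\<lambda>z. if z \<in> A then h (g2 z) else z)) = (g1 = g2)"
    proof
      assume e: "(\<lambda>z. if z \<in> A then h (g1 z) else z) = (\<lambda>z. if z \<in> A then h (g2 z) else z)"
      show "g1 = g2"
      proof (rule extensionalityI[of _ A])
        show "g1 \<in> extensional A" "g2 \<in> extensional A" using g1 g2 by (auto simp: PiE_def)
        fix z assume z: "z \<in> A"
        have "h (g1 z) = h (g2 z)" using fun_cong[OF e, of z] z by simp
        moreover have "g1 z \<in> B" "g2 z \<in> B" using g1 g2 z by auto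
        ultimately show "g1 z = g2 z" using h by (auto simp: bij_betw_def inj_on_def)
      qed
    qed auto
  next
    fix g assume g: "g \<in> {g \<in> A \<rightarrow>\<^sub>E B. bij_betw g A B}"
    then have "bij_betw (h \<circ> g) A A" using h by (auto intro: bij_betw_trans)
    then have "bij_betw (\<lambda>z. if z \<in> A then h (g z) else z) A A"
      by (rule bij_betw_cong[THEN iffD1, rotated]) auto
    then show "(\<lambda>z. if z \<in> A then h (g z) else z) \<in> {p. p permutes A}"
      by (auto intro!: bij_imp_permutes)
  next
    fix p assume p: "p \<in> {p. p permutes A}"
    then have pb: "bij_betw p A A" by (auto intro: permutes_imp_bij)
    have ib: "bij_betw (inv_into B h) A B" using h by (rule bij_betw_inv_into)
    define g where "g = restrict (\<lambda>z. inv_into B h (p z)) A"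
    have "bij_betw (inv_into B h \<circ> p) A B" using pb ib by (rule bij_betw_trans)
    then have gb: "bij_betw g A B" unfolding g_def
      by (rule bij_betw_cong[THEN iffD1, rotated]) auto
    have gP: "g \<in> A \<rightarrow>\<^sub>E B" using gb unfolding g_def by (auto simp: bij_betw_def)
    have "p = (\<lambda>z. if z \<in> A then h (g z) else z)"
    proof
      fix z show "p z = (if z \<in> A then h (g z) else z)"
      proof (cases "z \<in> A")
        case True
        then have "p z \<in> A" using pb by (auto simp: bij_betw_def)
        then have "h (inv_into B h (p z)) = p z" using h by (auto simp: bij_betw_def intro: f_inv_into_f)
        then show ?thesis using True by (simp add: g_def)
      next
        case False then show ?thesis using p by (simp add: permutes_def)
      qed
    qed
    then show "\<exists>g\<in>{g \<in> A \<rightarrow>\<^sub>E B. bij_betw g A B}. p = (\<lambda>z. if z \<in> A then h (g z) else z)"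
      using gb gP by blast
  qed
  then have "card {g \<in> A \<rightarrow>\<^sub>E B. bij_betw g A B} = card {p. p permutes A}" by (rule bij_betw_same_card)
  also have "\<dots> = fact (card A)" using fA by (simp add: card_permutations)
  finally show ?thesis .
qed

lemma card_transversals:
  assumes fN: "finite N" and I: "I \<subseteq> a ` N"
  shows "card {T. T \<subseteq> N \<and> inj_on a T \<and> a ` T = I} = (\<Prod>b\<in>I. card {i \<in> N. a i = b})"
proof -
  have fI: "finite I" using I fN finite_surj by blast
  have "bij_betw (\<lambda>h. h ` I) (\<Pi>\<^sub>E b\<in>I. {i \<in> N. a i = b}) {T. T \<subseteq> N \<and> inj_on a T \<and> a ` T = I}"
  proof (rule bij_betwI')
    fix h1 h2 assume h1: "h1 \<in> (\<Pi>\<^sub>E b\<in>I. {i \<in> N. a i = b})" and h2: "h2 \<in> (\<Pi>\<^sub>E b\<in>I. {i \<in> N. a i = b})"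
    show "(h1 ` I = h2 ` I) = (h1 = h2)"
    proof
      assume e: "h1 ` I = h2 ` I"
      show "h1 = h2"
      proof (rule extensionalityI[of _ I])
        show "h1 \<in> extensional I" "h2 \<in> extensional I" using h1 h2 by (auto simp: PiE_def)
        fix b assume b: "b \<in> I"
        then have "h1 b \<in> h2 ` I" using e by auto
        then obtain b' where b': "b' \<in> I" "h1 b = h2 b'" by auto
        have "a (h1 b) = b" using h1 b by auto
        moreover have "a (h2 b') = b'" using h2 b' by auto
        ultimately show "h1 b = h2 b" using b' by simp
      qed
    qed simp
  next
    fix h assume h: "h \<in> (\<Pi>\<^sub>E b\<in>I. {i \<in> N. a i = b})"
    have ah: "a (h b) = b" if "b \<in> I" for b using h that by auto
    have "a ` h ` I = I"
      using ah by (force simp: image_image)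
    moreover have "inj_on a (h ` I)"
      using ah by (auto simp: inj_on_def)
    moreover have "h ` I \<subseteq> N" using h by auto
    ultimately show "h ` I \<in> {T. T \<subseteq> N \<and> inj_on a T \<and> a ` T = I}" by simp
  next
    fix T assume T: "T \<in> {T. T \<subseteq> N \<and> inj_on a T \<and> a ` T = I}"
    define h where "h = restrict (the_inv_into T a) I"
    have hP: "h \<in> (\<Pi>\<^sub>E b\<in>I. {i \<in> N. a i = b})"
      using T by (auto simp: h_def the_inv_into_into f_the_inv_into_f)
    have "h ` I = T"
      using T by (force simp: h_def the_inv_into_f_f image_iff)
    then show "\<exists>h\<in>(\<Pi>\<^sub>E b\<in>I. {i \<in> N. a i = b}). T = h ` I" using hP by blast
  qed
  then have "card {T. T \<subseteq> N \<and> inj_on a T \<and> a ` T = I} = card (\<Pi>\<^sub>E b\<in>I. {i \<in> N. a i = b})"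
    by (simp add: bij_betw_same_card)
  also have "\<dots> = (\<Prod>b\<in>I. card {i \<in> N. a i = b})" using fI by (rule card_PiE)
  finally show ?thesis .
qed

lemma card_transversals_m:
  assumes fN: "finite N"
  shows "card {T. T \<subseteq> N \<and> inj_on a T \<and> card T = m}
     = (\<Sum>I\<in>{I. I \<subseteq> a ` N \<and> card I = m}. \<Prod>b\<in>I. card {i \<in> N. a i = b})"
proof -
  have eq: "{T. T \<subseteq> N \<and> inj_on a T \<and> card T = m}
      = (\<Union>I\<in>{I. I \<subseteq> a ` N \<and> card I = m}. {T. T \<subseteq> N \<and> inj_on a T \<and> a ` T = I})"
    by (auto simp: card_image) (use image_mono in blast)
  have fin: "finite {I. I \<subseteq> a ` N \<and> card I = m}" using fN by auto
  have "card {T. T \<subseteq> N \<and> inj_on a T \<and> card T = m}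
     = (\<Sum>I\<in>{I. I \<subseteq> a ` N \<and> card I = m}. card {T. T \<subseteq> N \<and> inj_on a T \<and> a ` T = I})"
    unfolding eq using fN by (intro card_UN_disjoint[OF fin]) auto
  also have "\<dots> = (\<Sum>I\<in>{I. I \<subseteq> a ` N \<and> card I = m}. \<Prod>b\<in>I. card {i \<in> N. a i = b})"
    using fN by (intro sum.cong refl card_transversals) auto
  finally show ?thesis .
qed




definition regm :: "nat \<Rightarrow> (nat \<Rightarrow> nat) \<Rightarrow> (nat \<Rightarrow> nat) \<Rightarrow> bool" where
  "regm n a y = inj_on a (y ` {1..n})"

definition samek :: "nat \<Rightarrow> (nat \<Rightarrow> nat) \<Rightarrow> (nat \<Rightarrow> nat) \<Rightarrow> bool" where
  "samek n x y = (\<forall>i\<in>{1..n}. \<forall>j\<in>{1..n}. x i = x j \<longleftrightarrow> y i = y j)"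

definition Kset :: "nat \<Rightarrow> (nat \<Rightarrow> nat) \<Rightarrow> (nat \<Rightarrow> nat) \<Rightarrow> (nat \<Rightarrow> nat) set" where
  "Kset n a x = {y \<in> Tn n. \<forall>i\<in>{1..n}. \<forall>j\<in>{1..n}. a (x i) = a (x j) \<longrightarrow> y i = y j}"

lemma Tn_mem: "x \<in> Tn n \<Longrightarrow> i \<in> {1..n} \<Longrightarrow> x i \<in> {1..n}"
  by (auto simp: Tn_def PiE_def Pi_def)

lemma Tn_out: "x \<in> Tn n \<Longrightarrow> i \<notin> {1..n} \<Longrightarrow> x i = undefined"
  by (auto simp: Tn_def PiE_def extensional_def)

lemma finite_Tn: "finite (Tn n)"
  by (simp add: Tn_def finite_PiE)

lemma card_Tn: "card (Tn n) = n ^ n"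
  by (simp add: Tn_def card_PiE)

lemma Tn_ext: "x \<in> Tn n \<Longrightarrow> y \<in> Tn n \<Longrightarrow> (\<And>i. i \<in> {1..n} \<Longrightarrow> x i = y i) \<Longrightarrow> x = y"
  by (rule ext) (metis Tn_out)

lemma restrict_Tn: "(\<And>i. i \<in> {1..n} \<Longrightarrow> f i \<in> {1..n}) \<Longrightarrow> restrict f {1..n} \<in> Tn n"
  unfolding Tn_def by (rule restrict_PiE_iff[THEN iffD2]) blast

lemma sand_Tn:
  assumes aT: "a \<in> Tn n" and xT: "x \<in> Tn n" and s: "s \<in> Tn n"
  shows "sand n a x s \<in> Tn n"
  unfolding sand_def by (rule restrict_Tn) (intro Tn_mem[OF s] Tn_mem[OF aT] Tn_mem[OF xT])

lemma sand_image:
  assumes n1: "1 \<le> n" and aT: "a \<in> Tn n" and xT: "x \<in> Tn n"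
  shows "{sand n a x s | s. s \<in> Tn n} = Kset n a x"
proof (intro equalityI subsetI)
  fix y assume "y \<in> {sand n a x s | s. s \<in> Tn n}"
  then obtain s where s: "s \<in> Tn n" and y: "y = sand n a x s" by auto
  have "y \<in> Tn n" unfolding y by (rule sand_Tn[OF aT xT s])
  moreover have "y i = y j" if "i \<in> {1..n}" "j \<in> {1..n}" "a (x i) = a (x j)" for i j
    using that unfolding y sand_def by simp
  ultimately show "y \<in> Kset n a x" unfolding Kset_def by blast
next
  fix y assume y: "y \<in> Kset n a x"
  have yT: "y \<in> Tn n" using y unfolding Kset_def by blast
  have yK: "y i = y j" if "i \<in> {1..n}" "j \<in> {1..n}" "a (x i) = a (x j)" for i j
    using y that unfolding Kset_def by blast
  define c where "c = (\<lambda>k. SOME i. i \<in> {1..n} \<and> a (x i) = k)"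
  define s where "s = restrict (\<lambda>k. if \<exists>i\<in>{1..n}. a (x i) = k then y (c k) else 1) {1..n}"
  have cP: "c k \<in> {1..n} \<and> a (x (c k)) = k" if "\<exists>i\<in>{1..n}. a (x i) = k" for k
  proof -
    from that have "\<exists>i. i \<in> {1..n} \<and> a (x i) = k" by blast
    then show ?thesis unfolding c_def by (rule someI_ex)
  qed
  have sT: "s \<in> Tn n" unfolding s_def
  proof (rule restrict_Tn)
    fix k assume "k \<in> {1..n}"
    show "(if \<exists>i\<in>{1..n}. a (x i) = k then y (c k) else 1) \<in> {1..n}"
    proof (cases "\<exists>i\<in>{1..n}. a (x i) = k")
      case True
      have "y (c k) \<in> {1..n}" using cP[OF True] by (intro Tn_mem[OF yT]) blast
      then show ?thesis using True by simp
    next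
      case False
      then show ?thesis using n1 by simp
    qed
  qed
  have "sand n a x s = y"
  proof (rule Tn_ext[of _ n])
    show "sand n a x s \<in> Tn n" by (rule sand_Tn[OF aT xT sT])
    show "y \<in> Tn n" by (rule yT)
    fix i assume i: "i \<in> {1..n}"
    have ex: "\<exists>i'\<in>{1..n}. a (x i') = a (x i)" using i by blast
    have axi: "a (x i) \<in> {1..n}" by (rule Tn_mem[OF aT Tn_mem[OF xT i]])
    have "s (a (x i)) = y (c (a (x i)))"
      unfolding s_def using ex axi by simp
    also have "\<dots> = y i" using yK[OF conjunct1[OF cP[OF ex]] i conjunct2[OF cP[OF ex]]] .
    finally show "sand n a x s i = y i" unfolding sand_def using i by simp
  qed
  then show "y \<in> {sand n a x s | s. s \<in> Tn n}" using sT by blast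
qed


lemma regm_iff: "regm n a x = (\<forall>i\<in>{1..n}. \<forall>j\<in>{1..n}. a (x i) = a (x j) \<longrightarrow> x i = x j)"
  unfolding regm_def
proof
  assume h: "inj_on a (x ` {1..n})"
  show "\<forall>i\<in>{1..n}. \<forall>j\<in>{1..n}. a (x i) = a (x j) \<longrightarrow> x i = x j"
  proof (intro ballI impI)
    fix i j assume "i \<in> {1..n}" "j \<in> {1..n}" "a (x i) = a (x j)"
    then show "x i = x j" using inj_onD[OF h] by (meson imageI)
  qed
next
  assume h: "\<forall>i\<in>{1..n}. \<forall>j\<in>{1..n}. a (x i) = a (x j) \<longrightarrow> x i = x j"
  show "inj_on a (x ` {1..n})"
  proof (rule inj_onI)
    fix u v assume "u \<in> x ` {1..n}" "v \<in> x ` {1..n}" "a u = a v"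
    then obtain i j where "i \<in> {1..n}" "j \<in> {1..n}" "u = x i" "v = x j" by blast
    then show "u = v" using h \<open>a u = a v\<close> by blast
  qed
qed

lemma rideal_K:
  assumes "1 \<le> n" "a \<in> Tn n" "x \<in> Tn n"
  shows "rideal n a x = insert x (Kset n a x)"
  unfolding rideal_def sand_image[OF assms] ..

lemma rideal_eq:
  assumes n1: "1 \<le> n" and aT: "a \<in> Tn n" and xT: "x \<in> Tn n" and yT: "y \<in> Tn n"
  shows "rideal n a x = rideal n a y \<longleftrightarrow> x = y \<or> (regm n a x \<and> regm n a y \<and> samek n x y)"
proof
  assume e: "rideal n a x = rideal n a y"
  show "x = y \<or> (regm n a x \<and> regm n a y \<and> samek n x y)"
  proof (cases "x = y")
    case False
    have "y \<in> rideal n a y" by (simp add: rideal_def)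
    then have "y \<in> insert x (Kset n a x)" using e unfolding rideal_K[OF n1 aT xT] by simp
    then have "y \<in> Kset n a x" using False by simp
    then have yK: "\<And>i j. i \<in> {1..n} \<Longrightarrow> j \<in> {1..n} \<Longrightarrow> a (x i) = a (x j) \<Longrightarrow> y i = y j"
      unfolding Kset_def by blast
    have "x \<in> rideal n a x" by (simp add: rideal_def)
    then have "x \<in> insert y (Kset n a y)" using e unfolding rideal_K[OF n1 aT yT] by simp
    then have "x \<in> Kset n a y" using False by simp
    then have xK: "\<And>i j. i \<in> {1..n} \<Longrightarrow> j \<in> {1..n} \<Longrightarrow> a (y i) = a (y j) \<Longrightarrow> x i = x j"
      unfolding Kset_def by blast
    have "regm n a x" unfolding regm_iff
    proof (intro ballI impI)
      fix i j assume ij: "i \<in> {1..n}" "j \<in> {1..n}" "a (x i) = a (x j)"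
      then have "y i = y j" by (rule yK)
      then have "a (y i) = a (y j)" by (rule arg_cong)
      then show "x i = x j" by (rule xK[OF ij(1,2)])
    qed
    moreover have "regm n a y" unfolding regm_iff
    proof (intro ballI impI)
      fix i j assume ij: "i \<in> {1..n}" "j \<in> {1..n}" "a (y i) = a (y j)"
      then have "x i = x j" by (rule xK)
      then have "a (x i) = a (x j)" by (rule arg_cong)
      then show "y i = y j" by (rule yK[OF ij(1,2)])
    qed
    moreover have "samek n x y" unfolding samek_def
    proof (intro ballI iffI)
      fix i j assume ij: "i \<in> {1..n}" "j \<in> {1..n}"
      { assume "x i = x j" then have "a (x i) = a (x j)" by (rule arg_cong)
        then show "y i = y j" by (rule yK[OF ij(1,2)]) }
      { assume "y i = y j" then have "a (y i) = a (y j)" by (rule arg_cong)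
        then show "x i = x j" by (rule xK[OF ij(1,2)]) }
    qed
    ultimately show ?thesis by simp
  qed simp
next
  assume h: "x = y \<or> (regm n a x \<and> regm n a y \<and> samek n x y)"
  show "rideal n a x = rideal n a y"
  proof (cases "x = y")
    case False
    then have rx: "regm n a x" and ry: "regm n a y" and sk: "samek n x y" using h by auto
    have kk: "a (x i) = a (x j) \<longleftrightarrow> a (y i) = a (y j)" if ij: "i \<in> {1..n}" "j \<in> {1..n}" for i j
    proof -
      have "a (x i) = a (x j) \<longleftrightarrow> x i = x j" using rx ij unfolding regm_iff by metis
      also have "\<dots> \<longleftrightarrow> y i = y j" using sk ij unfolding samek_def by blast
      also have "\<dots> \<longleftrightarrow> a (y i) = a (y j)" using ry ij unfolding regm_iff by metis
      finally show ?thesis .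
    qed
    have "Kset n a x = Kset n a y"
      unfolding Kset_def
    proof (intro Collect_cong conj_cong refl)
      fix z show "(\<forall>i\<in>{1..n}. \<forall>j\<in>{1..n}. a (x i) = a (x j) \<longrightarrow> z i = z j) =
           (\<forall>i\<in>{1..n}. \<forall>j\<in>{1..n}. a (y i) = a (y j) \<longrightarrow> z i = z j)"
        using kk by (intro ball_cong refl) presburger
    qed
    moreover have "x \<in> Kset n a x" using xT rx unfolding Kset_def regm_iff by blast
    moreover have "y \<in> Kset n a y" using yT ry unfolding Kset_def regm_iff by blast
    ultimately show ?thesis unfolding rideal_K[OF n1 aT xT] rideal_K[OF n1 aT yT] by (metis insert_absorb)
  qed simp
qed

lemma samek_sym: "samek n x y = samek n y x"
  unfolding samek_def by blast

lemma samek_refl: "samek n x x"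
  unfolding samek_def by blast

lemma Rclass_reg:
  assumes n1: "1 \<le> n" and aT: "a \<in> Tn n" and xT: "x \<in> Tn n" and rx: "regm n a x"
  shows "Rclass n a x = {y \<in> Tn n. regm n a y \<and> samek n x y}"
  unfolding Rclass_def
proof (intro Collect_cong conj_cong refl)
  fix y assume yT: "y \<in> Tn n"
  have "(rideal n a y = rideal n a x) = (y = x \<or> (regm n a y \<and> regm n a x \<and> samek n y x))"
    by (rule rideal_eq[OF n1 aT yT xT])
  also have "\<dots> = (regm n a y \<and> samek n x y)"
    using rx samek_refl[of n x] samek_sym[of n x y] by blast
  finally show "(rideal n a y = rideal n a x) = (regm n a y \<and> samek n x y)" .
qed

lemma Rclass_nonreg:
  assumes n1: "1 \<le> n" and aT: "a \<in> Tn n" and xT: "x \<in> Tn n" and rx: "\<not> regm n a x"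
  shows "Rclass n a x = {x}"
proof -
  have "(y \<in> Tn n \<and> rideal n a y = rideal n a x) = (y = x)" for y
  proof (cases "y \<in> Tn n")
    case True
    have "(rideal n a y = rideal n a x) = (y = x \<or> (regm n a y \<and> regm n a x \<and> samek n y x))"
      by (rule rideal_eq[OF n1 aT True xT])
    then show ?thesis using rx True by blast
  next
    case False then show ?thesis using xT by blast
  qed
  then show ?thesis unfolding Rclass_def by blast
qed

lemma Rclass_self: "x \<in> Tn n \<Longrightarrow> x \<in> Rclass n a x"
  by (simp add: Rclass_def)

lemma Rclass_mem_eq: "z \<in> Rclass n a x \<Longrightarrow> Rclass n a z = Rclass n a x"
  by (simp add: Rclass_def)




lemma samek_bij:
  assumes xT: "x \<in> Tn n" and yT: "y \<in> Tn n" and sk: "samek n x y"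
  shows "bij_betw (\<lambda>j. y (SOME i. i \<in> {1..n} \<and> x i = j)) (x ` {1..n}) (y ` {1..n})"
proof -
  define c where "c = (\<lambda>j. SOME i. i \<in> {1..n} \<and> x i = j)"
  have cP: "c (x i) \<in> {1..n} \<and> x (c (x i)) = x i" if "i \<in> {1..n}" for i
  proof -
    have "\<exists>i'. i' \<in> {1..n} \<and> x i' = x i" using that by blast
    then show ?thesis unfolding c_def by (rule someI_ex)
  qed
  have cy: "y (c (x i)) = y i" if i: "i \<in> {1..n}" for i
    using sk cP[OF i] i unfolding samek_def by blast
  have "bij_betw (\<lambda>j. y (c j)) (x ` {1..n}) (y ` {1..n})"
  proof (rule bij_betw_imageI)
    show "inj_on (\<lambda>j. y (c j)) (x ` {1..n})"
    proof (rule inj_onI)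
      fix u v assume "u \<in> x ` {1..n}" "v \<in> x ` {1..n}" and e: "y (c u) = y (c v)"
      then obtain i j where ij: "i \<in> {1..n}" "j \<in> {1..n}" "u = x i" "v = x j" by blast
      have "y i = y j" using e cy[OF ij(1)] cy[OF ij(2)] ij(3,4) by simp
      then show "u = v" using sk ij unfolding samek_def by blast
    qed
    show "(\<lambda>j. y (c j)) ` x ` {1..n} = y ` {1..n}"
      using cy by (force simp: image_image)
  qed
  then show ?thesis unfolding c_def .
qed

lemma samek_card:
  assumes "x \<in> Tn n" "y \<in> Tn n" "samek n x y"
  shows "card (y ` {1..n}) = card (x ` {1..n})"
  using bij_betw_same_card[OF samek_bij[OF assms]] by simp

lemma class_piece:
  assumes xT: "x \<in> Tn n" and TN: "T \<subseteq> {1..n}"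
  shows "card {y \<in> Tn n. samek n x y \<and> y ` {1..n} = T} = card {g \<in> x ` {1..n} \<rightarrow>\<^sub>E T. bij_betw g (x ` {1..n}) T}"
proof -
  have "bij_betw (\<lambda>g. restrict (\<lambda>i. g (x i)) {1..n}) {g \<in> x ` {1..n} \<rightarrow>\<^sub>E T. bij_betw g (x ` {1..n}) T}
          {y \<in> Tn n. samek n x y \<and> y ` {1..n} = T}"
  proof (rule bij_betwI')
    fix g1 g2 assume g1: "g1 \<in> {g \<in> x ` {1..n} \<rightarrow>\<^sub>E T. bij_betw g (x ` {1..n}) T}"
      and g2: "g2 \<in> {g \<in> x ` {1..n} \<rightarrow>\<^sub>E T. bij_betw g (x ` {1..n}) T}"
    show "(restrict (\<lambda>i. g1 (x i)) {1..n} = restrict (\<lambda>i. g2 (x i)) {1..n}) = (g1 = g2)"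
    proof
      assume e: "restrict (\<lambda>i. g1 (x i)) {1..n} = restrict (\<lambda>i. g2 (x i)) {1..n}"
      show "g1 = g2"
      proof (rule extensionalityI[of _ "x ` {1..n}"])
        show "g1 \<in> extensional (x ` {1..n})" "g2 \<in> extensional (x ` {1..n})" using g1 g2 by (auto simp: PiE_def)
        fix j assume "j \<in> x ` {1..n}"
        then obtain i where i: "i \<in> {1..n}" "j = x i" by blast
        show "g1 j = g2 j" using fun_cong[OF e, of i] i by simp
      qed
    qed auto
  next
    fix g assume g: "g \<in> {g \<in> x ` {1..n} \<rightarrow>\<^sub>E T. bij_betw g (x ` {1..n}) T}"
    then have gP: "g \<in> x ` {1..n} \<rightarrow>\<^sub>E T" and gb: "bij_betw g (x ` {1..n}) T" by auto
    have "restrict (\<lambda>i. g (x i)) {1..n} \<in> Tn n"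
      by (rule restrict_Tn) (use gP TN in blast)
    moreover have "samek n x (restrict (\<lambda>i. g (x i)) {1..n})"
      unfolding samek_def
    proof (intro ballI)
      fix i j assume ij: "i \<in> {1..n}" "j \<in> {1..n}"
      have ig: "inj_on g (x ` {1..n})" using gb by (rule bij_betw_imp_inj_on)
      have e: "g (x i) = g (x j) \<longleftrightarrow> x i = x j"
        by (rule inj_on_eq_iff[OF ig]) (use ij in blast)+
      have r1: "restrict (\<lambda>i. g (x i)) {1..n} i = g (x i)" using ij(1) by (rule restrict_apply')
      have r2: "restrict (\<lambda>i. g (x i)) {1..n} j = g (x j)" using ij(2) by (rule restrict_apply')
      show "(x i = x j) = (restrict (\<lambda>i. g (x i)) {1..n} i = restrict (\<lambda>i. g (x i)) {1..n} j)"
        unfolding r1 r2 e ..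
    qed
    moreover have "restrict (\<lambda>i. g (x i)) {1..n} ` {1..n} = T"
    proof -
      have "restrict (\<lambda>i. g (x i)) {1..n} ` {1..n} = g ` x ` {1..n}"
        unfolding image_restrict_eq image_image ..
      then show ?thesis using gb by (simp add: bij_betw_def)
    qed
    ultimately show "restrict (\<lambda>i. g (x i)) {1..n} \<in> {y \<in> Tn n. samek n x y \<and> y ` {1..n} = T}"
      unfolding mem_Collect_eq by (intro conjI)
  next
    fix y assume y: "y \<in> {y \<in> Tn n. samek n x y \<and> y ` {1..n} = T}"
    then have yT: "y \<in> Tn n" and sk: "samek n x y" and yi: "y ` {1..n} = T" by blast+
    define c where "c = (\<lambda>j. SOME i. i \<in> {1..n} \<and> x i = j)"
    define g where "g = restrict (\<lambda>j. y (c j)) (x ` {1..n})"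
    have cP: "c (x i) \<in> {1..n} \<and> x (c (x i)) = x i" if "i \<in> {1..n}" for i
    proof -
      have "\<exists>i'. i' \<in> {1..n} \<and> x i' = x i" using that by blast
      then show ?thesis unfolding c_def by (rule someI_ex)
    qed
    have cy: "y (c (x i)) = y i" if i: "i \<in> {1..n}" for i
      using sk cP[OF i] i unfolding samek_def by blast
    have b0: "bij_betw (\<lambda>j. y (c j)) (x ` {1..n}) T"
      using samek_bij[OF xT yT sk] yi unfolding c_def by simp
    have gb: "bij_betw g (x ` {1..n}) T"
      unfolding g_def by (rule bij_betw_cong[THEN iffD1, OF _ b0]) simp
    have gP: "g \<in> x ` {1..n} \<rightarrow>\<^sub>E T"
      using b0 unfolding g_def bij_betw_def by auto
    have "y = restrict (\<lambda>i. g (x i)) {1..n}"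
    proof (rule Tn_ext[OF yT])
      show "restrict (\<lambda>i. g (x i)) {1..n} \<in> Tn n"
        by (rule restrict_Tn) (use gP TN in blast)
      fix i assume i: "i \<in> {1..n}"
      show "y i = restrict (\<lambda>i. g (x i)) {1..n} i"
        using i cy[OF i] by (simp add: g_def)
    qed
    then show "\<exists>g\<in>{g \<in> x ` {1..n} \<rightarrow>\<^sub>E T. bij_betw g (x ` {1..n}) T}. y = restrict (\<lambda>i. g (x i)) {1..n}"
      using gb gP by blast
  qed
  then show ?thesis by (simp add: bij_betw_same_card)
qed




definition TT :: "nat \<Rightarrow> (nat \<Rightarrow> nat) \<Rightarrow> nat \<Rightarrow> nat set set" where
  "TT n a m = {T. T \<subseteq> {1..n} \<and> inj_on a T \<and> card T = m}"

lemma card_TT: "card (TT n a m) = esum n a m"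
  unfolding TT_def esum_def fibre_card_def by (rule card_transversals_m) simp

lemma finite_TT: "finite (TT n a m)"
  unfolding TT_def by (rule finite_subset[of _ "Pow {1..n}"]) auto

lemma Tn_image_sub: "y \<in> Tn n \<Longrightarrow> y ` {1..n} \<subseteq> {1..n}"
  using Tn_mem by blast

lemma class_card:
  assumes xT: "x \<in> Tn n"
  shows "card {y \<in> Tn n. regm n a y \<and> samek n x y} = fact (card (x ` {1..n})) * esum n a (card (x ` {1..n}))"
proof -
  define m where "m = card (x ` {1..n})"
  have eq: "{y \<in> Tn n. regm n a y \<and> samek n x y} = (\<Union>T\<in>TT n a m. {y \<in> Tn n. samek n x y \<and> y ` {1..n} = T})"
  proof (intro equalityI subsetI)
    fix y assume "y \<in> {y \<in> Tn n. regm n a y \<and> samek n x y}"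
    then have yT: "y \<in> Tn n" and r: "regm n a y" and sk: "samek n x y" by blast+
    have "y ` {1..n} \<in> TT n a m"
      using Tn_image_sub[OF yT] r samek_card[OF xT yT sk] unfolding TT_def regm_def m_def by blast
    then show "y \<in> (\<Union>T\<in>TT n a m. {y \<in> Tn n. samek n x y \<and> y ` {1..n} = T})" using yT sk by blast
  next
    fix y assume "y \<in> (\<Union>T\<in>TT n a m. {y \<in> Tn n. samek n x y \<and> y ` {1..n} = T})"
    then obtain T where T: "T \<in> TT n a m" and yT: "y \<in> Tn n" and sk: "samek n x y" and yi: "y ` {1..n} = T" by blast
    have "regm n a y" using T yi unfolding TT_def regm_def by blast
    then show "y \<in> {y \<in> Tn n. regm n a y \<and> samek n x y}" using yT sk by blast
  qed
  have "card {y \<in> Tn n. regm n a y \<and> samek n x y} = (\<Sum>T\<in>TT n a m. card {y \<in> Tn n. samek n x y \<and> y ` {1..n} = T})"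
    unfolding eq
  proof (rule card_UN_disjoint[OF finite_TT])
    show "\<forall>T\<in>TT n a m. finite {y \<in> Tn n. samek n x y \<and> y ` {1..n} = T}"
      using finite_Tn by auto
    show "\<forall>T1\<in>TT n a m. \<forall>T2\<in>TT n a m. T1 \<noteq> T2 \<longrightarrow>
      {y \<in> Tn n. samek n x y \<and> y ` {1..n} = T1} \<inter> {y \<in> Tn n. samek n x y \<and> y ` {1..n} = T2} = {}"
      by blast
  qed
  also have "\<dots> = (\<Sum>T\<in>TT n a m. fact m)"
  proof (rule sum.cong[OF refl])
    fix T assume T: "T \<in> TT n a m"
    then have TN: "T \<subseteq> {1..n}" and cT: "card T = m" unfolding TT_def by blast+
    have fT: "finite T" using TN finite_subset by blast
    show "card {y \<in> Tn n. samek n x y \<and> y ` {1..n} = T} = fact m"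
      unfolding class_piece[OF xT TN] using card_bijs[of "x ` {1..n}" T] fT cT unfolding m_def by simp
  qed
  also have "\<dots> = fact m * esum n a m" using card_TT[of n a m] by simp
  finally show ?thesis unfolding m_def .
qed

lemma R_card:
  "card {y \<in> Tn n. regm n a y \<and> card (y ` {1..n}) = m} = esum n a m * (fact m * Stirling n m)"
proof -
  have eq: "{y \<in> Tn n. regm n a y \<and> card (y ` {1..n}) = m} = (\<Union>T\<in>TT n a m. {y \<in> Tn n. y ` {1..n} = T})"
  proof (intro equalityI subsetI)
    fix y assume "y \<in> {y \<in> Tn n. regm n a y \<and> card (y ` {1..n}) = m}"
    then have yT: "y \<in> Tn n" and r: "regm n a y" and c: "card (y ` {1..n}) = m" by blast+
    have "y ` {1..n} \<in> TT n a m"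
      using Tn_image_sub[OF yT] r c unfolding TT_def regm_def by blast
    then show "y \<in> (\<Union>T\<in>TT n a m. {y \<in> Tn n. y ` {1..n} = T})" using yT by blast
  next
    fix y assume "y \<in> (\<Union>T\<in>TT n a m. {y \<in> Tn n. y ` {1..n} = T})"
    then obtain T where T: "T \<in> TT n a m" and yT: "y \<in> Tn n" and yi: "y ` {1..n} = T" by blast
    have "regm n a y" "card (y ` {1..n}) = m" using T yi unfolding TT_def regm_def by blast+
    then show "y \<in> {y \<in> Tn n. regm n a y \<and> card (y ` {1..n}) = m}" using yT by blast
  qed
  have "card {y \<in> Tn n. regm n a y \<and> card (y ` {1..n}) = m} = (\<Sum>T\<in>TT n a m. card {y \<in> Tn n. y ` {1..n} = T})"
    unfolding eq
  proof (rule card_UN_disjoint[OF finite_TT])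
    show "\<forall>T\<in>TT n a m. finite {y \<in> Tn n. y ` {1..n} = T}"
      using finite_Tn by auto
    show "\<forall>T1\<in>TT n a m. \<forall>T2\<in>TT n a m. T1 \<noteq> T2 \<longrightarrow>
      {y \<in> Tn n. y ` {1..n} = T1} \<inter> {y \<in> Tn n. y ` {1..n} = T2} = {}"
      by blast
  qed
  also have "\<dots> = (\<Sum>T\<in>TT n a m. fact m * Stirling n m)"
  proof (rule sum.cong[OF refl])
    fix T assume T: "T \<in> TT n a m"
    then have TN: "T \<subseteq> {1..n}" and cT: "card T = m" unfolding TT_def by blast+
    have fT: "finite T" using TN finite_subset by blast
    have "{y \<in> Tn n. y ` {1..n} = T} = {f \<in> {1..n} \<rightarrow>\<^sub>E T. f ` {1..n} = T}"
    proof (intro equalityI subsetI)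
      fix y assume "y \<in> {y \<in> Tn n. y ` {1..n} = T}"
      then show "y \<in> {f \<in> {1..n} \<rightarrow>\<^sub>E T. f ` {1..n} = T}" unfolding Tn_def PiE_iff by blast
    next
      fix y assume "y \<in> {f \<in> {1..n} \<rightarrow>\<^sub>E T. f ` {1..n} = T}"
      then show "y \<in> {y \<in> Tn n. y ` {1..n} = T}" using TN unfolding Tn_def PiE_iff by blast
    qed
    then show "card {y \<in> Tn n. y ` {1..n} = T} = fact m * Stirling n m"
      using card_onto[of "{1..n}" T] fT cT by simp
  qed
  also have "\<dots> = esum n a m * (fact m * Stirling n m)" using card_TT[of n a m] by simp
  finally show ?thesis .
qed

lemma esum_pos:
  assumes aT: "a \<in> Tn n" and m: "m \<le> rank n a"
  shows "0 < esum n a m"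
proof -
  obtain I where I: "I \<subseteq> a ` {1..n}" "card I = m" "finite I"
    using obtain_subset_with_card_n[of m "a ` {1..n}"] m unfolding rank_def by blast
  have fin: "finite {I. I \<subseteq> a ` {1..n} \<and> card I = m}" by simp
  have "0 < (\<Prod>b\<in>I. fibre_card n a b)"
  proof (rule prod_pos)
    fix b assume "b \<in> I"
    then obtain i where "i \<in> {1..n}" "a i = b" using I by blast
    then have "{i \<in> {1..n}. a i = b} \<noteq> {}" by blast
    then show "0 < fibre_card n a b" unfolding fibre_card_def by (simp add: card_gt_0_iff)
  qed
  then show ?thesis unfolding esum_def
    using I by (intro sum_pos2[OF fin, of I]) auto
qed

lemma esum_1: "esum n a 1 = n"
proof -
  have "TT n a 1 = (\<lambda>t. {t}) ` {1..n}"
    unfolding TT_def by (auto simp: card_1_singleton_iff)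
  then have "card (TT n a 1) = n" by (simp add: card_image)
  then show ?thesis using card_TT by simp
qed

lemma reg_rank:
  assumes xT: "x \<in> Tn n" and r: "regm n a x" and n1: "1 \<le> n"
  shows "1 \<le> rank n x" "rank n x \<le> rank n a"
proof -
  have "x ` {1..n} \<noteq> {}" using n1 by simp
  then show "1 \<le> rank n x" unfolding rank_def by (simp add: Suc_le_eq card_gt_0_iff)
  have "card (x ` {1..n}) = card (a ` x ` {1..n})" using r unfolding regm_def by (simp add: card_image)
  also have "\<dots> \<le> card (a ` {1..n})" by (rule card_mono) (use Tn_image_sub[OF xT] in auto)
  finally show "rank n x \<le> rank n a" unfolding rank_def .
qed




theorem proposition7:
  fixes n :: nat and a :: "nat \<Rightarrow> nat"
  assumes "n > 1" and "a \<in> Tn n"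
  shows "(\<forall>m \<in> {1..rank n a}.
            card {C \<in> Rclasses n a. card C > 1 \<and> (\<forall>x\<in>C. rank n x = m)} = Stirling n m
          \<and> (\<forall>C \<in> Rclasses n a. card C > 1 \<and> (\<forall>x\<in>C. rank n x = m)
                 \<longrightarrow> card C = fact m * esum n a m))
       \<and> {C \<in> Rclasses n a. card C > 1}
           = {C \<in> Rclasses n a. card C > 1 \<and> (\<exists>m \<in> {1..rank n a}. \<forall>x\<in>C. rank n x = m)}
       \<and> card {C \<in> Rclasses n a. card C > 1} = (\<Sum>m = 1..rank n a. Stirling n m)
       \<and> int (card {C \<in> Rclasses n a. card C = 1})
           = int n ^ n - (\<Sum>m = 1..rank n a. int (Stirling n m * fact m * esum n a m))"
proof -
  have n1: "1 \<le> n" using assms(1) by simp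
  have aT: "a \<in> Tn n" by (rule assms(2))
  define p where "p = rank n a"
  define R where "R = (\<lambda>m. {y \<in> Tn n. regm n a y \<and> rank n y = m})"
  define Cls where "Cls = (\<lambda>m. {C \<in> Rclasses n a. card C > 1 \<and> (\<forall>x\<in>C. rank n x = m)})"
  define Reg where "Reg = {y \<in> Tn n. regm n a y}"
  have K1card: "card (Rclass n a x) = fact (rank n x) * esum n a (rank n x)"
    if xT: "x \<in> Tn n" and r: "regm n a x" for x
    unfolding Rclass_reg[OF n1 aT xT r] class_card[OF xT] rank_def ..
  have K1mem: "y \<in> Tn n \<and> regm n a y \<and> rank n y = rank n x"
    if xT: "x \<in> Tn n" and r: "regm n a x" and y: "y \<in> Rclass n a x" for x y
  proof -
    have "y \<in> Tn n" "regm n a y" "samek n x y" using y unfolding Rclass_reg[OF n1 aT xT r] by blast+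
    then show ?thesis using samek_card[OF xT] unfolding rank_def by simp
  qed
  have K1gt: "1 < card (Rclass n a x)" if xT: "x \<in> Tn n" and r: "regm n a x" for x
  proof -
    define m where "m = rank n x"
    have m1: "1 \<le> m" and mp: "m \<le> p" using reg_rank[OF xT r n1] unfolding m_def p_def by auto
    have ep: "0 < esum n a m" using esum_pos[OF aT] mp unfolding p_def by simp
    show ?thesis
    proof (cases "m = 1")
      case True
      then show ?thesis using K1card[OF xT r] esum_1[of n a] assms(1) unfolding m_def by simp
    next
      case False
      then have "2 \<le> m" using m1 by simp
      then have "(2::nat) \<le> fact m" using fact_ge_self[of m] by linarith
      then have "2 \<le> fact m * esum n a m" using ep
        by (metis dual_order.trans less_one mult.right_neutral mult_le_mono2 not_less)
      then show ?thesis using K1card[OF xT r] unfolding m_def by simp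
    qed
  qed
  have K3: "\<exists>x\<in>Tn n. C = Rclass n a x" if "C \<in> Rclasses n a" for C
    using that unfolding Rclasses_def by blast
  have Rcl_in: "Rclass n a x \<in> Rclasses n a" if "x \<in> Tn n" for x
    using that unfolding Rclasses_def by blast
  have finRcl: "finite (Rclasses n a)" unfolding Rclasses_def using finite_Tn by simp
  have finC: "finite C" if "C \<in> Rclasses n a" for C
    using that finite_Tn unfolding Rclasses_def Rclass_def by auto
  have MCreg: "\<exists>x\<in>Tn n. regm n a x \<and> C = Rclass n a x" if C: "C \<in> Rclasses n a" "card C > 1" for C
  proof -
    obtain x where xT: "x \<in> Tn n" and Cx: "C = Rclass n a x" using K3[OF C(1)] by blast
    have "regm n a x"
    proof (rule ccontr)
      assume "\<not> regm n a x"
      then have "C = {x}" using Rclass_nonreg[OF n1 aT xT] Cx by simp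
      then show False using C(2) by simp
    qed
    then show ?thesis using xT Cx by blast
  qed
  have Cls_eq: "Cls m = Rclass n a ` R m" for m
  proof (intro equalityI subsetI)
    fix C assume "C \<in> Cls m"
    then have C: "C \<in> Rclasses n a" "card C > 1" and rk: "\<forall>x\<in>C. rank n x = m" unfolding Cls_def by blast+
    obtain x where xT: "x \<in> Tn n" and r: "regm n a x" and Cx: "C = Rclass n a x" using MCreg[OF C] by blast
    have "rank n x = m" using rk Cx Rclass_self[OF xT] by blast
    then show "C \<in> Rclass n a ` R m" using xT r Cx unfolding R_def by blast
  next
    fix C assume "C \<in> Rclass n a ` R m"
    then obtain x where x: "x \<in> R m" and Cx: "C = Rclass n a x" by blast
    then have xT: "x \<in> Tn n" and r: "regm n a x" and rk: "rank n x = m" unfolding R_def by blast+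
    show "C \<in> Cls m" unfolding Cls_def Cx using Rcl_in[OF xT] K1gt[OF xT r] K1mem[OF xT r] rk by blast
  qed
  have UCls: "\<Union>(Cls m) = R m" for m
  proof (intro equalityI subsetI)
    fix y assume "y \<in> \<Union>(Cls m)"
    then obtain x where x: "x \<in> R m" and y: "y \<in> Rclass n a x" unfolding Cls_eq by blast
    then have xT: "x \<in> Tn n" and r: "regm n a x" and rk: "rank n x = m" unfolding R_def by blast+
    show "y \<in> R m" using K1mem[OF xT r y] rk unfolding R_def by simp
  next
    fix y assume y: "y \<in> R m"
    then have "y \<in> Tn n" unfolding R_def by blast
    then have "y \<in> Rclass n a y" by (rule Rclass_self)
    then show "y \<in> \<Union>(Cls m)" using y unfolding Cls_eq by blast
  qed
  have cardR: "card (R m) = card (Cls m) * (fact m * esum n a m)" for m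
  proof -
    have "card (R m) = sum card (Cls m)"
      unfolding UCls[symmetric]
    proof (rule card_Union_disjoint)
      show "pairwise disjnt (Cls m)"
        unfolding pairwise_def disjnt_def Cls_eq
      proof (intro ballI impI)
        fix C1 C2 assume C1: "C1 \<in> Rclass n a ` R m" and C2: "C2 \<in> Rclass n a ` R m" and ne: "C1 \<noteq> C2"
        show "C1 \<inter> C2 = {}"
        proof (rule ccontr)
          assume "C1 \<inter> C2 \<noteq> {}"
          then obtain z where z1: "z \<in> C1" and z2: "z \<in> C2" by blast
          obtain x1 where "C1 = Rclass n a x1" using C1 by blast
          then have "C1 = Rclass n a z" using z1 Rclass_mem_eq by metis
          moreover obtain x2 where "C2 = Rclass n a x2" using C2 by blast
          then have "C2 = Rclass n a z" using z2 Rclass_mem_eq by metis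
          ultimately show False using ne by simp
        qed
      qed
      show "finite C" if "C \<in> Cls m" for C using that finC unfolding Cls_def by blast
    qed
    also have "\<dots> = (\<Sum>C\<in>Cls m. fact m * esum n a m)"
    proof (rule sum.cong[OF refl])
      fix C assume "C \<in> Cls m"
      then obtain x where x: "x \<in> R m" and Cx: "C = Rclass n a x" unfolding Cls_eq by blast
      then have xT: "x \<in> Tn n" and r: "regm n a x" and rk: "rank n x = m" unfolding R_def by blast+
      show "card C = fact m * esum n a m" using K1card[OF xT r] rk Cx by simp
    qed
    also have "\<dots> = card (Cls m) * (fact m * esum n a m)" by simp
    finally show ?thesis .
  qed
  have cardR2: "card (R m) = esum n a m * (fact m * Stirling n m)" for m
    using R_card[of n a m] unfolding R_def rank_def by simp
  have P1: "card (Cls m) = Stirling n m" if m: "m \<in> {1..p}" for m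
  proof -
    have "0 < esum n a m" using esum_pos[OF aT] m unfolding p_def by simp
    moreover have "(0::nat) < fact m" by simp
    ultimately have pos: "0 < fact m * esum n a m" by simp
    have "card (Cls m) * (fact m * esum n a m) = Stirling n m * (fact m * esum n a m)"
      using cardR[of m] cardR2[of m] by (simp only: mult.commute mult.left_commute)
    then show ?thesis using pos by (metis mult_right_cancel not_less0 zero_less_iff_neq_zero)
  qed
  have P1b: "card C = fact m * esum n a m" if C: "C \<in> Rclasses n a" "card C > 1" "\<forall>x\<in>C. rank n x = m" for C m
  proof -
    obtain x where xT: "x \<in> Tn n" and r: "regm n a x" and Cx: "C = Rclass n a x" using MCreg[OF C(1,2)] by blast
    have "rank n x = m" using C(3) Cx Rclass_self[OF xT] by blast
    then show ?thesis using K1card[OF xT r] Cx by simp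
  qed
  have P2: "{C \<in> Rclasses n a. card C > 1} = (\<Union>m\<in>{1..p}. Cls m)"
  proof (intro equalityI subsetI)
    fix C assume "C \<in> {C \<in> Rclasses n a. card C > 1}"
    then have C: "C \<in> Rclasses n a" "card C > 1" by blast+
    obtain x where xT: "x \<in> Tn n" and r: "regm n a x" and Cx: "C = Rclass n a x" using MCreg[OF C] by blast
    have "rank n x \<in> {1..p}" using reg_rank[OF xT r n1] unfolding p_def by simp
    moreover have "C \<in> Cls (rank n x)" unfolding Cls_def using C K1mem[OF xT r] Cx by blast
    ultimately show "C \<in> (\<Union>m\<in>{1..p}. Cls m)" by blast
  next
    fix C assume "C \<in> (\<Union>m\<in>{1..p}. Cls m)"
    then show "C \<in> {C \<in> Rclasses n a. card C > 1}" unfolding Cls_def by blast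
  qed
  have P2': "{C \<in> Rclasses n a. card C > 1}
           = {C \<in> Rclasses n a. card C > 1 \<and> (\<exists>m \<in> {1..rank n a}. \<forall>x\<in>C. rank n x = m)}"
    using P2 unfolding Cls_def p_def by blast
  have P3: "card {C \<in> Rclasses n a. card C > 1} = (\<Sum>m = 1..p. Stirling n m)"
  proof -
    have "card (\<Union>m\<in>{1..p}. Cls m) = (\<Sum>m = 1..p. card (Cls m))"
    proof (rule card_UN_disjoint)
      show "finite {1..p}" by simp
      show "\<forall>m\<in>{1..p}. finite (Cls m)" using finRcl unfolding Cls_def by simp
      show "\<forall>i\<in>{1..p}. \<forall>j\<in>{1..p}. i \<noteq> j \<longrightarrow> Cls i \<inter> Cls j = {}"
      proof (intro ballI impI)
        fix i j :: nat assume ne: "i \<noteq> j"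
        show "Cls i \<inter> Cls j = {}"
        proof (rule ccontr)
          assume "Cls i \<inter> Cls j \<noteq> {}"
          then obtain C where Ci: "C \<in> Cls i" and Cj: "C \<in> Cls j" by blast
          then have "card C > 1" unfolding Cls_def by blast
          then obtain z where "z \<in> C" by (metis card.empty ex_in_conv not_less_zero)
          then have "rank n z = i" "rank n z = j" using Ci Cj unfolding Cls_def by blast+
          then show False using ne by simp
        qed
      qed
    qed
    then show ?thesis using P1 P2 by simp
  qed
  have S1: "{C \<in> Rclasses n a. card C = 1} = (\<lambda>x. {x}) ` (Tn n - Reg)"
  proof (intro equalityI subsetI)
    fix C assume "C \<in> {C \<in> Rclasses n a. card C = 1}"
    then have C: "C \<in> Rclasses n a" "card C = 1" by blast+
    obtain x where xT: "x \<in> Tn n" and Cx: "C = Rclass n a x" using K3[OF C(1)] by blast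
    have r: "\<not> regm n a x" using K1gt[OF xT] C(2) Cx by fastforce
    then have "C = {x}" using Rclass_nonreg[OF n1 aT xT] Cx by simp
    then show "C \<in> (\<lambda>x. {x}) ` (Tn n - Reg)" using xT r unfolding Reg_def by blast
  next
    fix C assume "C \<in> (\<lambda>x. {x}) ` (Tn n - Reg)"
    then obtain x where xT: "x \<in> Tn n" and r: "\<not> regm n a x" and Cx: "C = {x}" unfolding Reg_def by blast
    have "C = Rclass n a x" using Rclass_nonreg[OF n1 aT xT r] Cx by simp
    moreover have "card C = 1" using Cx by simp
    ultimately show "C \<in> {C \<in> Rclasses n a. card C = 1}" using Rcl_in[OF xT] by blast
  qed
  have cS1: "card {C \<in> Rclasses n a. card C = 1} = card (Tn n - Reg)"
    unfolding S1 by (rule card_image) (simp add: inj_on_def)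
  have RegU: "Reg = (\<Union>m\<in>{1..p}. R m)"
  proof (intro equalityI subsetI)
    fix y assume "y \<in> Reg"
    then have yT: "y \<in> Tn n" and r: "regm n a y" unfolding Reg_def by blast+
    have "rank n y \<in> {1..p}" using reg_rank[OF yT r n1] unfolding p_def by simp
    then show "y \<in> (\<Union>m\<in>{1..p}. R m)" using yT r unfolding R_def by blast
  next
    fix y assume "y \<in> (\<Union>m\<in>{1..p}. R m)"
    then show "y \<in> Reg" unfolding R_def Reg_def by blast
  qed
  have cReg: "card Reg = (\<Sum>m = 1..p. Stirling n m * fact m * esum n a m)"
  proof -
    have "card Reg = (\<Sum>m = 1..p. card (R m))"
      unfolding RegU
    proof (rule card_UN_disjoint)
      show "finite {1..p}" by simp
      show "\<forall>m\<in>{1..p}. finite (R m)" using finite_Tn unfolding R_def by simp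
      show "\<forall>i\<in>{1..p}. \<forall>j\<in>{1..p}. i \<noteq> j \<longrightarrow> R i \<inter> R j = {}" unfolding R_def by blast
    qed
    also have "\<dots> = (\<Sum>m = 1..p. Stirling n m * fact m * esum n a m)"
      by (rule sum.cong[OF refl]) (simp add: cardR2 algebra_simps)
    finally show ?thesis .
  qed
  have RegSub: "Reg \<subseteq> Tn n" unfolding Reg_def by blast
  have "card (Tn n - Reg) = card (Tn n) - card Reg" by (rule card_Diff_subset) (use RegSub finite_subset finite_Tn in blast)+
  moreover have "card Reg \<le> card (Tn n)" by (rule card_mono[OF finite_Tn RegSub])
  ultimately have "int (card (Tn n - Reg)) = int (card (Tn n)) - int (card Reg)" by simp
  then have P4: "int (card {C \<in> Rclasses n a. card C = 1})
           = int n ^ n - (\<Sum>m = 1..rank n a. int (Stirling n m * fact m * esum n a m))"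
    unfolding cS1 card_Tn cReg p_def by (simp add: of_nat_sum)
  show ?thesis
    using P1 P1b P2' P3 P4 unfolding Cls_def p_def by blast
qed


end
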